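(* Under the assumptions that $p,q>0$ $\mu$-a.e. and $\rho^{\mathrm w}_\alpha(p,q)\in(0,\infty)$ for all $\alpha\in[0,1]$, \[ \mathrm{TV}_\varphi(\mathbb P^{\otimes n},\mathbb Q^{\otimes n})=\frac12\Big((E_\varphi(p))^n+(E_\varphi(q))^n\Big)-\exp\{-nD_C^{\mathrm w}(\mathbb P,\mathbb Q)+o(n)\},\qquad n\to\infty . \]
   Context: Let $\mathcal X$ be a Polish space, $\mu$ a $\sigma$-finite reference measure, $\mathbb P,\mathbb Q$ probability measures with densities $p,q$ w.r.t. $\mu$, and $\varphi:\mathcal X\to[0,\infty)$ a measurable weight extended by $\varphi(x_1^n)=\prod_{i=1}^n\varphi(x_i)$; $p(x_1^n)=\prod_ip(x_i)$, $q(x_1^n)=\prod_iq(x_i)$. $E_\varphi(r)=\int_{\mathcal X}\varphi r\,\mathrm d\mu$. Weighted total variation: $\mathrm{TV}_\varphi(\mathbb P^{\otimes n},\mathbb Q^{\otimes n})=\frac12\int_{\mathcal X^n}\varphi(x_1^n)|p(x_1^n)-q(x_1^n)|\,\mathrm d\mu^{\otimes n}(x_1^n)$. Weighted affinity $\rho^{\mathrm w}_\alpha(p,q)=\int\varphi\,p^\alpha q^{1-\alpha}\,\mathrm d\mu$, and weighted Chernoff information $D_C^{\mathrm w}(\mathbb P,\mathbb Q)=\max_{\alpha\in[0,1]}[-\ln\rho^{\mathrm w}_\alpha(p,q)]$. *)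

theory Defs
  imports "HOL-Probability.Probability"
begin

definition tuple_weight :: "('a \<Rightarrow> real) \<Rightarrow> nat \<Rightarrow> (nat \<Rightarrow> 'a) \<Rightarrow> real" where
  "tuple_weight f n x = (\<Prod>i<n. f (x i))"

definition E_phi :: "'a measure \<Rightarrow> ('a \<Rightarrow> real) \<Rightarrow> ('a \<Rightarrow> real) \<Rightarrow> real" where
  "E_phi M \<phi> r = (\<integral>x. \<phi> x * r x \<partial>M)"

definition TV_phi :: "'a measure \<Rightarrow> ('a \<Rightarrow> real) \<Rightarrow> ('a \<Rightarrow> real) \<Rightarrow> ('a \<Rightarrow> real) \<Rightarrow> nat \<Rightarrow> real" where
  "TV_phi M \<phi> p q n = (1/2) * (\<integral>x. tuple_weight \<phi> n x *
       \<bar>tuple_weight p n x - tuple_weight q n x\<bar> \<partial>(PiM {..<n} (\<lambda>_. M)))"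

text \<open>Weighted affinity, as an extended nonnegative real (so finiteness can be stated).\<close>
definition rho_w :: "'a measure \<Rightarrow> ('a \<Rightarrow> real) \<Rightarrow> ('a \<Rightarrow> real) \<Rightarrow> ('a \<Rightarrow> real) \<Rightarrow> real \<Rightarrow> ennreal" where
  "rho_w M \<phi> p q \<alpha> = (\<integral>\<^sup>+x. ennreal (\<phi> x * p x powr \<alpha> * q x powr (1 - \<alpha>)) \<partial>M)"

definition chernoff_w :: "'a measure \<Rightarrow> ('a \<Rightarrow> real) \<Rightarrow> ('a \<Rightarrow> real) \<Rightarrow> ('a \<Rightarrow> real) \<Rightarrow> real" where
  "chernoff_w M \<phi> p q = (SUP \<alpha>\<in>{0..1}. - ln (enn2real (rho_w M \<phi> p q \<alpha>)))"

end

theory Submission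
  imports Defs
begin


lemma exp_tangent: "exp a - exp b \<le> (a - b) * exp (a::real)"
proof -
  have "exp b = exp a * exp (b - a)" by (simp add: exp_diff)
  also have "\<dots> \<ge> exp a * (1 + (b - a))"
    by (intro mult_left_mono exp_ge_add_one_self) auto
  finally show ?thesis by (simp add: algebra_simps)
qed

lemma abs_exp_diff: "\<bar>exp a - exp b\<bar> \<le> \<bar>a - b\<bar> * exp (max a (b::real))"
proof -
  have 1: "exp a - exp b \<le> \<bar>a - b\<bar> * exp (max a b)"
  proof (cases "a \<le> b")
    case True
    then have "exp a - exp b \<le> 0" by simp
    then show ?thesis by (smt (verit) exp_gt_zero mult_nonneg_nonneg abs_ge_zero)
  next
    case False
    then show ?thesis using exp_tangent[of a b] by (simp add: max_def)
  qed
  have 2: "exp b - exp a \<le> \<bar>a - b\<bar> * exp (max a b)"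
  proof (cases "b \<le> a")
    case True
    then have "exp b - exp a \<le> 0" by simp
    then show ?thesis by (smt (verit) exp_gt_zero mult_nonneg_nonneg abs_ge_zero)
  next
    case False
    then show ?thesis using exp_tangent[of b a] by (simp add: max_def)
  qed
  show ?thesis using 1 2 by linarith
qed

lemma exp_taylor2: "\<bar>exp y - 1 - y\<bar> \<le> y\<^sup>2 * exp \<bar>y::real\<bar>"
proof -
  have lo: "0 \<le> exp y - 1 - y" using exp_ge_add_one_self[of y] by linarith
  have "exp 0 - exp y \<le> (0 - y) * exp 0" using exp_tangent[of 0 y] by simp
  have t: "exp y - 1 \<le> y * exp y" using exp_tangent[of y 0] by simp
  then have "exp y - 1 - y \<le> y * (exp y - 1)" by (simp add: algebra_simps)
  also have "\<dots> \<le> \<bar>y\<bar> * \<bar>exp y - 1\<bar>" by (simp add: abs_mult[symmetric])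
  also have "\<bar>exp y - 1\<bar> \<le> \<bar>y\<bar> * exp \<bar>y\<bar>"
  proof -
    have "\<bar>exp y - exp 0\<bar> \<le> \<bar>y - 0\<bar> * exp (max y 0)" by (rule abs_exp_diff)
    also have "\<dots> \<le> \<bar>y\<bar> * exp \<bar>y\<bar>"
    proof -
      have "exp (max y 0) \<le> exp \<bar>y\<bar>" by (auto simp: max_def)
      then show ?thesis by (simp add: mult_left_mono)
    qed
    finally show ?thesis by simp
  qed
  then have "\<bar>y\<bar> * \<bar>exp y - 1\<bar> \<le> \<bar>y\<bar> * (\<bar>y\<bar> * exp \<bar>y\<bar>)"
    by (intro mult_left_mono) auto
  finally show ?thesis using lo by (simp add: power2_eq_square)
qed

lemma one_le_y_ypow: assumes "y > 0" "h > 0" shows "1 \<le> y + y powr (-h::real)"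
proof (cases "y \<ge> 1")
  case True then show ?thesis using powr_ge_zero[of y "-h"] by linarith
next
  case False
  then have "1 \<le> (1/y) powr h" using assms by (intro ge_one_powr_ge_zero) auto
  also have "(1/y) powr h = y powr (-h)" using assms by (simp add: powr_minus_divide powr_divide)
  finally show ?thesis using assms by simp
qed

lemma key_pointwise:
  fixes A h a L :: real
  assumes "A > 0" "h > 0"
  shows "exp (a * L) \<le> A * min (exp L) 1 + A powr (-h) * (exp (a * (1 + h) * L) + exp ((a - (1 - a) * h) * L))"
proof (cases "L \<ge> 0")
  case True
  define y where "y = A * exp (- a * L)"
  have y: "y > 0" using assms by (simp add: y_def)
  have "1 \<le> y + y powr (-h)" using one_le_y_ypow[OF y assms(2)] .
  then have "exp (a * L) * 1 \<le> exp (a*L) * (y + y powr (-h))" by (intro mult_left_mono) auto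
  also have "\<dots> = A + A powr (-h) * exp (a * (1 + h) * L)"
    using assms by (simp add: y_def powr_mult powr_def ln_mult algebra_simps flip: exp_add)
  also have "\<dots> \<le> A * min (exp L) 1 + A powr (-h) * (exp (a * (1 + h) * L) + exp ((a - (1 - a) * h) * L))"
    using True by (simp add: min_def algebra_simps)
  finally show ?thesis by simp
next
  case False
  define y where "y = A * exp ((1 - a) * L)"
  have y: "y > 0" using assms by (simp add: y_def)
  have "1 \<le> y + y powr (-h)" using one_le_y_ypow[OF y assms(2)] .
  then have "exp (a * L) * 1 \<le> exp (a*L) * (y + y powr (-h))" by (intro mult_left_mono) auto
  also have "\<dots> = A * exp L + A powr (-h) * exp ((a - (1 - a) * h) * L)"
    using assms by (simp add: y_def powr_mult powr_def ln_mult algebra_simps flip: exp_add)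
  also have "\<dots> \<le> A * min (exp L) 1 + A powr (-h) * (exp (a * (1 + h) * L) + exp ((a - (1 - a) * h) * L))"
    using False by (simp add: min_def algebra_simps)
  finally show ?thesis by simp
qed




locale chern =
  fixes M :: "'a measure" and p q \<phi> :: "'a \<Rightarrow> real"
  assumes sf: "sigma_finite_measure M"
    and pm[measurable]: "p \<in> borel_measurable M" and qm[measurable]: "q \<in> borel_measurable M"
    and phim[measurable]: "\<phi> \<in> borel_measurable M"
    and p0: "\<And>x. p x \<ge> 0" and q0: "\<And>x. q x \<ge> 0" and phi0: "\<And>x. \<phi> x \<ge> 0"
    and intp: "integrable M (\<lambda>x. \<phi> x * p x)" and intq: "integrable M (\<lambda>x. \<phi> x * q x)"
begin

abbreviation PM where "PM n \<equiv> PiM {..<n} (\<lambda>_. M)"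

lemma psf: "product_sigma_finite (\<lambda>_. M)"
  using sf by (simp add: product_sigma_finite_def)

lemma meas_tuple[measurable]:
  fixes f :: "'a \<Rightarrow> real"
  assumes "f \<in> borel_measurable M"
  shows "(\<lambda>x. \<Prod>i<n. f (x i)) \<in> borel_measurable (PM n)"
proof (intro borel_measurable_prod)
  fix i assume "i \<in> {..<n}"
  then show "(\<lambda>x. f (x i)) \<in> borel_measurable (PM n)"
    using measurable_compose[OF measurable_component_singleton[of i "{..<n}" "\<lambda>_. M"] assms] by simp
qed

lemma prod_int:
  fixes f :: "'a \<Rightarrow> real"
  assumes "integrable M f"
  shows "integrable (PM n) (\<lambda>x. \<Prod>i<n. f (x i))"
    and "(\<integral>x. (\<Prod>i<n. f (x i)) \<partial>PM n) = (\<integral>x. f x \<partial>M) ^ n"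
proof -
  interpret product_sigma_finite "\<lambda>_. M" by (rule psf)
  show "integrable (PM n) (\<lambda>x. \<Prod>i<n. f (x i))"
    using product_integrable_prod[of "{..<n}" "\<lambda>_. f"] assms by simp
  show "(\<integral>x. (\<Prod>i<n. f (x i)) \<partial>PM n) = (\<integral>x. f x \<partial>M) ^ n"
    using product_integral_prod[of "{..<n}" "\<lambda>_. f"] assms by simp
qed

definition mm :: "nat \<Rightarrow> real" where
  "mm n = (\<integral>x. tuple_weight \<phi> n x * min (tuple_weight p n x) (tuple_weight q n x) \<partial>PM n)"

lemma tw_mult: "tuple_weight f n x * tuple_weight g n x = (\<Prod>i<n. f (x i) * g (x i))"
  by (simp add: tuple_weight_def prod.distrib)

lemma tw_nonneg: "(\<And>y. f y \<ge> 0) \<Longrightarrow> tuple_weight f n x \<ge> 0"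
  by (simp add: tuple_weight_def prod_nonneg)

lemma int_min: "integrable (PM n) (\<lambda>x. tuple_weight \<phi> n x * min (tuple_weight p n x) (tuple_weight q n x))"
proof (rule Bochner_Integration.integrable_bound)
  show "integrable (PM n) (\<lambda>x. \<Prod>i<n. \<phi> (x i) * p (x i))" by (rule prod_int(1)[OF intp])
  show "(\<lambda>x. tuple_weight \<phi> n x * min (tuple_weight p n x) (tuple_weight q n x)) \<in> borel_measurable (PM n)"
    unfolding tuple_weight_def by measurable
  show "AE x in PM n. norm (tuple_weight \<phi> n x * min (tuple_weight p n x) (tuple_weight q n x))
      \<le> norm (\<Prod>i<n. \<phi> (x i) * p (x i))"
  proof (intro AE_I2)
    fix x
    have a: "tuple_weight \<phi> n x \<ge> 0" "tuple_weight p n x \<ge> 0" "tuple_weight q n x \<ge> 0"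
      using phi0 p0 q0 by (auto intro: tw_nonneg)
    have "tuple_weight \<phi> n x * min (tuple_weight p n x) (tuple_weight q n x) \<le> tuple_weight \<phi> n x * tuple_weight p n x"
      using a by (intro mult_left_mono) auto
    then show "norm (tuple_weight \<phi> n x * min (tuple_weight p n x) (tuple_weight q n x))
      \<le> norm (\<Prod>i<n. \<phi> (x i) * p (x i))"
      using a by (simp add: tw_mult[symmetric])
  qed
qed

lemma TV_eq: "TV_phi M \<phi> p q n = 1/2 * ((E_phi M \<phi> p)^n + (E_phi M \<phi> q)^n) - mm n"
proof -
  have pt: "tuple_weight \<phi> n x * \<bar>tuple_weight p n x - tuple_weight q n x\<bar> =
     (\<Prod>i<n. \<phi> (x i) * p (x i)) + (\<Prod>i<n. \<phi> (x i) * q (x i)) -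
     2 * (tuple_weight \<phi> n x * min (tuple_weight p n x) (tuple_weight q n x))" for x
  proof -
    have "\<bar>tuple_weight p n x - tuple_weight q n x\<bar> = tuple_weight p n x + tuple_weight q n x - 2 * min (tuple_weight p n x) (tuple_weight q n x)"
      by (simp add: min_def)
    then show ?thesis by (simp add: tw_mult[symmetric] right_diff_distrib distrib_left)
  qed
  have "(\<integral>x. tuple_weight \<phi> n x * \<bar>tuple_weight p n x - tuple_weight q n x\<bar> \<partial>PM n) =
     (\<integral>x. (\<Prod>i<n. \<phi> (x i) * p (x i)) + (\<Prod>i<n. \<phi> (x i) * q (x i)) -
     2 * (tuple_weight \<phi> n x * min (tuple_weight p n x) (tuple_weight q n x)) \<partial>PM n)"
    by (simp add: pt)
  also have "\<dots> = (E_phi M \<phi> p)^n + (E_phi M \<phi> q)^n - 2 * mm n"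
    using prod_int[OF intp] prod_int[OF intq] int_min
    by (simp add: E_phi_def mm_def)
  finally show ?thesis by (simp add: TV_phi_def)
qed


definition ell :: "'a \<Rightarrow> real" where "ell x = ln (p x) - ln (q x)"
definition SK :: "real \<Rightarrow> 'a set" where "SK K = {x \<in> space M. p x > 0 \<and> q x > 0 \<and> \<bar>ell x\<bar> \<le> K}"
definition gK :: "real \<Rightarrow> 'a \<Rightarrow> real" where "gK K x = indicator (SK K) x * (\<phi> x * q x)"
definition fK :: "real \<Rightarrow> real \<Rightarrow> 'a \<Rightarrow> real" where "fK K b x = gK K x * exp (b * ell x)"
definition rK :: "real \<Rightarrow> real \<Rightarrow> real" where "rK K b = (\<integral>x. fK K b x \<partial>M)"
definition dK :: "real \<Rightarrow> real \<Rightarrow> real" where "dK K b = (\<integral>x. gK K x * ell x * exp (b * ell x) \<partial>M)"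
definition ww :: "real \<Rightarrow> 'a \<Rightarrow> real" where "ww a x = \<phi> x * (p x powr a * q x powr (1 - a))"

lemma ell_meas[measurable]: "ell \<in> borel_measurable M" unfolding ell_def by measurable

lemma SK_sets[measurable]: "SK K \<in> sets M" unfolding SK_def by measurable

lemma gK_meas[measurable]: "gK K \<in> borel_measurable M" unfolding gK_def by measurable

lemma fK_meas[measurable]: "fK K b \<in> borel_measurable M" unfolding fK_def by measurable

lemma gK_nonneg: "gK K x \<ge> 0" using phi0 q0 by (simp add: gK_def)

lemma fK_nonneg: "fK K b x \<ge> 0" using gK_nonneg by (simp add: fK_def)

lemma int_gK_bdd:
  assumes [measurable]: "h \<in> borel_measurable M" and hb: "\<And>x. x \<in> SK K \<Longrightarrow> \<bar>h x\<bar> \<le> c"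
  shows "integrable M (\<lambda>x. gK K x * h x)"
proof (rule Bochner_Integration.integrable_bound)
  show "integrable M (\<lambda>x. c * (\<phi> x * q x))" using intq by simp
  show "(\<lambda>x. gK K x * h x) \<in> borel_measurable M" by measurable
  show "AE x in M. norm (gK K x * h x) \<le> norm (c * (\<phi> x * q x))"
  proof (intro AE_I2)
    fix x
    show "norm (gK K x * h x) \<le> norm (c * (\<phi> x * q x))"
    proof (cases "x \<in> SK K")
      case True
      have "\<bar>h x\<bar> * (\<phi> x * q x) \<le> c * (\<phi> x * q x)"
        using hb[OF True] phi0 q0 by (intro mult_right_mono) auto
      then show ?thesis using True phi0[of x] q0[of x] hb[OF True]
        by (simp add: gK_def abs_mult mult_ac)
    qed (simp add: gK_def)
  qed
qed

lemma int_fK: "integrable M (fK K b)"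
proof -
  have "integrable M (\<lambda>x. gK K x * exp (b * ell x))"
  proof (rule int_gK_bdd)
    fix x assume "x \<in> SK K"
    then have "\<bar>ell x\<bar> \<le> K" by (simp add: SK_def)
    then have "b * ell x \<le> \<bar>b\<bar> * K"
      by (metis abs_ge_self abs_mult abs_ge_zero mult_left_mono order_trans)
    then show "\<bar>exp (b * ell x)\<bar> \<le> exp (\<bar>b\<bar> * K)" by simp
  qed measurable
  then show ?thesis by (simp add: fK_def[abs_def])
qed

lemma int_gK: "integrable M (gK K)"
  using int_gK_bdd[of "\<lambda>_. 1" K 1] by simp

lemma int_dK: "integrable M (\<lambda>x. gK K x * ell x * exp (b * ell x))"
proof -
  have "integrable M (\<lambda>x. gK K x * (ell x * exp (b * ell x)))"
  proof (rule int_gK_bdd)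
    fix x assume "x \<in> SK K"
    then have e: "\<bar>ell x\<bar> \<le> K" by (simp add: SK_def)
    then have "b * ell x \<le> \<bar>b\<bar> * K"
      by (metis abs_ge_self abs_mult abs_ge_zero mult_left_mono order_trans)
    then have "exp (b * ell x) \<le> exp (\<bar>b\<bar> * K)" by simp
    then show "\<bar>ell x * exp (b * ell x)\<bar> \<le> K * exp (\<bar>b\<bar> * K)"
      using e by (simp add: abs_mult mult_mono)
  qed measurable
  then show ?thesis by (simp add: mult.assoc)
qed

lemma on_SK: assumes "x \<in> SK K" shows "p x powr b * q x powr (1 - b) = q x * exp (b * ell x)"
  and "p x = q x * exp (ell x)"
proof -
  have pq: "p x > 0" "q x > 0" using assms by (auto simp: SK_def)
  show "p x powr b * q x powr (1 - b) = q x * exp (b * ell x)"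
  proof -
    have "p x powr b * q x powr (1 - b) = exp (b * ln (p x) + (1 - b) * ln (q x))"
      using pq by (simp add: powr_def exp_add)
    also have "b * ln (p x) + (1 - b) * ln (q x) = ln (q x) + b * ell x"
      by (simp add: ell_def algebra_simps)
    also have "exp (ln (q x) + b * ell x) = q x * exp (b * ell x)"
      using pq by (simp add: exp_add)
    finally show ?thesis .
  qed
  show "p x = q x * exp (ell x)"
    using pq by (simp add: ell_def exp_diff)
qed

lemma fK_le_ww: "fK K b x \<le> ww b x"
proof (cases "x \<in> SK K")
  case True
  then show ?thesis using on_SK(1)[OF True, of b] by (simp add: fK_def gK_def ww_def)
next
  case False
  then show ?thesis using phi0[of x] by (simp add: fK_def gK_def ww_def)
qed

lemma upper:
  assumes "0 \<le> a" "a \<le> 1" "integrable M (ww a)"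
  shows "mm n \<le> (\<integral>x. ww a x \<partial>M) ^ n"
proof -
  have pt: "tuple_weight \<phi> n x * min (tuple_weight p n x) (tuple_weight q n x) \<le> (\<Prod>i<n. ww a (x i))" for x
  proof -
    have T: "tuple_weight \<phi> n x \<ge> 0" using phi0 by (rule tw_nonneg)
    have R: "(\<Prod>i<n. ww a (x i)) = tuple_weight \<phi> n x * ((\<Prod>i<n. p (x i) powr a) * (\<Prod>i<n. q (x i) powr (1 - a)))"
      by (simp add: ww_def tuple_weight_def prod.distrib)
    have "min (tuple_weight p n x) (tuple_weight q n x) \<le> (\<Prod>i<n. p (x i) powr a) * (\<Prod>i<n. q (x i) powr (1 - a))"
    proof (cases "\<exists>i<n. p (x i) = 0 \<or> q (x i) = 0")
      case True
      then have "tuple_weight p n x = 0 \<or> tuple_weight q n x = 0"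
        by (auto simp: tuple_weight_def)
      then show ?thesis using tw_nonneg[of p n x, OF p0] tw_nonneg[of q n x, OF q0]
        by (auto simp: min_def prod_nonneg)
    next
      case False
      define P where "P = tuple_weight p n x"
      define Q where "Q = tuple_weight q n x"
      have P: "P > 0" using False p0 unfolding P_def tuple_weight_def
        by (intro prod_pos) (metis lessThan_iff order_le_less)
      have Q: "Q > 0" using False q0 unfolding Q_def tuple_weight_def
        by (intro prod_pos) (metis lessThan_iff order_le_less)
      have e: "(\<Prod>i<n. p (x i) powr a) * (\<Prod>i<n. q (x i) powr (1 - a)) = P powr a * Q powr (1 - a)"
        by (simp add: P_def Q_def tuple_weight_def prod_powr_distrib)
      have "min P Q = min P Q powr a * min P Q powr (1 - a)"
        using P Q by (simp add: powr_add[symmetric])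
      also have "\<dots> \<le> P powr a * Q powr (1 - a)"
        using P Q assms by (intro mult_mono powr_mono2) auto
      finally show ?thesis using e by (simp add: P_def Q_def)
    qed
    then show ?thesis using T R by (simp add: mult_left_mono)
  qed
  have "mm n \<le> (\<integral>x. (\<Prod>i<n. ww a (x i)) \<partial>PM n)"
    unfolding mm_def by (intro integral_mono int_min prod_int(1) assms pt)
  also have "\<dots> = (\<integral>x. ww a x \<partial>M) ^ n" by (rule prod_int(2)[OF assms(3)])
  finally show ?thesis .
qed


lemma core:
  assumes A: "A > 0" and h: "h > 0"
  shows "(rK K a) ^ n \<le> A * mm n + A powr (-h) * ((rK K (a * (1 + h))) ^ n + (rK K (a - (1 - a) * h)) ^ n)"
proof -
  define b1 where "b1 = a * (1 + h)"
  define b2 where "b2 = a - (1 - a) * h"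
  let ?T = "\<lambda>x. tuple_weight \<phi> n x * min (tuple_weight p n x) (tuple_weight q n x)"
  have pt: "(\<Prod>i<n. fK K a (x i)) \<le> A * ?T x + A powr (-h) * ((\<Prod>i<n. fK K b1 (x i)) + (\<Prod>i<n. fK K b2 (x i)))" for x
  proof (cases "\<forall>i<n. x i \<in> SK K")
    case False
    then obtain i where i: "i < n" "x i \<notin> SK K" by auto
    then have Z: "(\<Prod>i<n. fK K a (x i)) = 0"
      by (intro prod_zero) (auto simp: fK_def gK_def intro!: bexI[of _ i])
    have "?T x \<ge> 0"
      using tw_nonneg[of \<phi>, OF phi0] tw_nonneg[of p, OF p0] tw_nonneg[of q, OF q0] by simp
    then have 1: "A * ?T x \<ge> 0" using A by simp
    have "(\<Prod>i<n. fK K b1 (x i)) \<ge> 0" "(\<Prod>i<n. fK K b2 (x i)) \<ge> 0"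
      by (auto intro!: prod_nonneg fK_nonneg)
    then have 2: "A powr (-h) * ((\<Prod>i<n. fK K b1 (x i)) + (\<Prod>i<n. fK K b2 (x i))) \<ge> 0"
      by simp
    have "0 \<le> A * ?T x + A powr (-h) * ((\<Prod>i<n. fK K b1 (x i)) + (\<Prod>i<n. fK K b2 (x i)))"
      using 1 2 by linarith
    then show ?thesis using Z by linarith
  next
    case True
    define G where "G = (\<Prod>i<n. \<phi> (x i) * q (x i))"
    define L where "L = (\<Sum>i<n. ell (x i))"
    have G: "G \<ge> 0" unfolding G_def using phi0 q0 by (intro prod_nonneg) auto
    have F: "(\<Prod>i<n. fK K b (x i)) = G * exp (b * L)" for b
    proof -
      have "(\<Prod>i<n. fK K b (x i)) = (\<Prod>i<n. (\<phi> (x i) * q (x i)) * exp (b * ell (x i)))"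
        using True by (intro prod.cong) (auto simp: fK_def gK_def)
      also have "\<dots> = G * (\<Prod>i<n. exp (b * ell (x i)))" by (simp add: G_def prod.distrib)
      also have "(\<Prod>i<n. exp (b * ell (x i))) = exp (b * L)"
        by (simp add: L_def exp_sum sum_distrib_left)
      finally show ?thesis .
    qed
    have Tx: "?T x = G * min (exp L) 1"
    proof -
      have Qp: "tuple_weight q n x > 0" unfolding tuple_weight_def
        using True by (intro prod_pos) (auto simp: SK_def)
      have "tuple_weight p n x = (\<Prod>i<n. q (x i) * exp (ell (x i)))"
        unfolding tuple_weight_def using True on_SK(2) by (intro prod.cong) auto
      also have "\<dots> = tuple_weight q n x * exp L"
        by (simp add: tuple_weight_def prod.distrib L_def exp_sum)
      finally have "tuple_weight p n x = tuple_weight q n x * exp L" .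
      then have "min (tuple_weight p n x) (tuple_weight q n x) = tuple_weight q n x * min (exp L) 1"
        using Qp by (simp add: min_def)
      then show ?thesis by (simp add: G_def tw_mult[symmetric] mult_ac)
    qed
    have "G * exp (a * L) \<le> G * (A * min (exp L) 1 + A powr (-h) * (exp (b1 * L) + exp (b2 * L)))"
      using key_pointwise[OF A h, of a L] G unfolding b1_def b2_def by (intro mult_left_mono) auto
    then show ?thesis unfolding F Tx by (simp add: algebra_simps)
  qed
  have "(rK K a) ^ n = (\<integral>x. (\<Prod>i<n. fK K a (x i)) \<partial>PM n)"
    unfolding rK_def by (rule prod_int(2)[OF int_fK, symmetric])
  also have "\<dots> \<le> (\<integral>x. A * ?T x + A powr (-h) * ((\<Prod>i<n. fK K b1 (x i)) + (\<Prod>i<n. fK K b2 (x i))) \<partial>PM n)"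
    by (intro integral_mono pt prod_int(1) int_fK int_min Bochner_Integration.integrable_add
        integrable_mult_right)
  also have "\<dots> = A * mm n + A powr (-h) * ((rK K b1) ^ n + (rK K b2) ^ n)"
    using prod_int[OF int_fK[of K b1]] prod_int[OF int_fK[of K b2]] int_min[of n]
    by (simp add: mm_def rK_def)
  finally show ?thesis by (simp add: b1_def b2_def)
qed


lemma ell_bd: "x \<in> SK K \<Longrightarrow> \<bar>ell x\<bar> \<le> K" by (simp add: SK_def)

lemma mul_ell_bd: "x \<in> SK K \<Longrightarrow> \<bar>b * ell x\<bar> \<le> \<bar>b\<bar> * K"
  using ell_bd[of x K] by (simp add: abs_mult mult_left_mono)

lemma taylor_rK:
  assumes K: "K \<ge> 0"
  shows "\<bar>rK K (b + t) - rK K b - t * dK K b\<bar> \<le> t\<^sup>2 * (K\<^sup>2 * exp ((\<bar>b\<bar> + \<bar>t\<bar>) * K)) * (\<integral>x. gK K x \<partial>M)"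
proof -
  define c where "c = t\<^sup>2 * (K\<^sup>2 * exp ((\<bar>b\<bar> + \<bar>t\<bar>) * K))"
  have i1: "integrable M (\<lambda>x. fK K (b + t) x - fK K b x - t * (gK K x * ell x * exp (b * ell x)))"
    using int_fK int_dK by (intro Bochner_Integration.integrable_diff integrable_mult_right) auto
  have eq: "rK K (b + t) - rK K b - t * dK K b = (\<integral>x. fK K (b + t) x - fK K b x - t * (gK K x * ell x * exp (b * ell x)) \<partial>M)"
    using int_fK int_dK by (simp add: rK_def dK_def)
  have pt: "\<bar>fK K (b + t) x - fK K b x - t * (gK K x * ell x * exp (b * ell x))\<bar> \<le> c * gK K x" for x
  proof (cases "x \<in> SK K")
    case True
    have "fK K (b + t) x - fK K b x - t * (gK K x * ell x * exp (b * ell x)) =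
        gK K x * exp (b * ell x) * (exp (t * ell x) - 1 - t * ell x)"
      by (simp add: fK_def algebra_simps flip: exp_add)
    then have "\<bar>fK K (b + t) x - fK K b x - t * (gK K x * ell x * exp (b * ell x))\<bar> =
        gK K x * exp (b * ell x) * \<bar>exp (t * ell x) - 1 - t * ell x\<bar>"
      using gK_nonneg[of K x] by (simp add: abs_mult)
    also have "\<dots> \<le> gK K x * exp (\<bar>b\<bar> * K) * ((t * ell x)\<^sup>2 * exp (\<bar>t\<bar> * K))"
    proof (intro mult_mono mult_left_mono)
      show "exp (b * ell x) \<le> exp (\<bar>b\<bar> * K)" using mul_ell_bd[OF True, of b] by simp
      have "\<bar>exp (t * ell x) - 1 - t * ell x\<bar> \<le> (t * ell x)\<^sup>2 * exp \<bar>t * ell x\<bar>" by (rule exp_taylor2)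
      also have "\<dots> \<le> (t * ell x)\<^sup>2 * exp (\<bar>t\<bar> * K)"
        using mul_ell_bd[OF True, of t] by (intro mult_left_mono) auto
      finally show "\<bar>exp (t * ell x) - 1 - t * ell x\<bar> \<le> (t * ell x)\<^sup>2 * exp (\<bar>t\<bar> * K)" .
    qed (use gK_nonneg in auto)
    also have "\<dots> \<le> gK K x * exp (\<bar>b\<bar> * K) * ((t\<^sup>2 * K\<^sup>2) * exp (\<bar>t\<bar> * K))"
    proof -
      have "(t * ell x)\<^sup>2 \<le> t\<^sup>2 * K\<^sup>2"
        using ell_bd[OF True] K by (simp add: power_mult_distrib mult_left_mono power_mono abs_le_square_iff[symmetric] abs_of_nonneg)
      then show ?thesis using gK_nonneg[of K x] by (intro mult_left_mono mult_right_mono) auto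
    qed
    also have "\<dots> = c * gK K x" by (simp add: c_def exp_add[symmetric] algebra_simps)
    finally show ?thesis .
  qed (simp add: fK_def gK_def)
  have "\<bar>rK K (b + t) - rK K b - t * dK K b\<bar> \<le> (\<integral>x. \<bar>fK K (b + t) x - fK K b x - t * (gK K x * ell x * exp (b * ell x))\<bar> \<partial>M)"
    unfolding eq by (rule integral_abs_bound)
  also have "\<dots> \<le> (\<integral>x. c * gK K x \<partial>M)"
    by (intro integral_mono pt integrable_mult_right int_gK Bochner_Integration.integrable_abs i1)
  also have "\<dots> = c * (\<integral>x. gK K x \<partial>M)" by simp
  finally show ?thesis by (simp add: c_def)
qed

lemma lip_rK:
  assumes K: "K \<ge> 0" and b: "\<bar>b\<bar> \<le> 1" and c: "\<bar>c\<bar> \<le> 1"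
  shows "\<bar>rK K b - rK K c\<bar> \<le> \<bar>b - c\<bar> * (K * exp K * (\<integral>x. gK K x \<partial>M))"
proof -
  have pt: "\<bar>fK K b x - fK K c x\<bar> \<le> (\<bar>b - c\<bar> * K * exp K) * gK K x" for x
  proof (cases "x \<in> SK K")
    case True
    have "\<bar>fK K b x - fK K c x\<bar> = gK K x * \<bar>exp (b * ell x) - exp (c * ell x)\<bar>"
      using gK_nonneg[of K x] by (simp add: fK_def abs_mult right_diff_distrib[symmetric])
    also have "\<dots> \<le> gK K x * (\<bar>b * ell x - c * ell x\<bar> * exp (max (b * ell x) (c * ell x)))"
      using gK_nonneg[of K x] by (intro mult_left_mono abs_exp_diff) auto
    also have "\<dots> \<le> gK K x * (\<bar>b - c\<bar> * K * exp K)"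
    proof (intro mult_left_mono gK_nonneg)
      have "\<bar>b * ell x - c * ell x\<bar> = \<bar>b - c\<bar> * \<bar>ell x\<bar>" by (simp add: left_diff_distrib[symmetric] abs_mult)
      also have "\<dots> \<le> \<bar>b - c\<bar> * K" using ell_bd[OF True] by (intro mult_left_mono) auto
      finally have 1: "\<bar>b * ell x - c * ell x\<bar> \<le> \<bar>b - c\<bar> * K" .
      have "\<bar>b\<bar> * K \<le> K" "\<bar>c\<bar> * K \<le> K" using b c K by (simp_all add: mult_left_le_one_le)
      then have "b * ell x \<le> K" "c * ell x \<le> K"
        using mul_ell_bd[OF True, of b] mul_ell_bd[OF True, of c] abs_ge_self[of "b*ell x"] abs_ge_self[of "c*ell x"]
        by linarith+
      then have 2: "exp (max (b * ell x) (c * ell x)) \<le> exp K" by simp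
      show "\<bar>b * ell x - c * ell x\<bar> * exp (max (b * ell x) (c * ell x)) \<le> \<bar>b - c\<bar> * K * exp K"
        using 1 2 K by (intro mult_mono) auto
    qed
    finally show ?thesis by (simp add: mult_ac)
  qed (simp add: fK_def gK_def)
  have "\<bar>rK K b - rK K c\<bar> = \<bar>\<integral>x. fK K b x - fK K c x \<partial>M\<bar>"
    using int_fK by (simp add: rK_def)
  also have "\<dots> \<le> (\<integral>x. \<bar>fK K b x - fK K c x\<bar> \<partial>M)" by (rule integral_abs_bound)
  also have "\<dots> \<le> (\<integral>x. (\<bar>b - c\<bar> * K * exp K) * gK K x \<partial>M)"
    by (intro integral_mono pt integrable_mult_right int_gK Bochner_Integration.integrable_abs
        Bochner_Integration.integrable_diff int_fK)
  also have "\<dots> = \<bar>b - c\<bar> * (K * exp K * (\<integral>x. gK K x \<partial>M))" by (simp add: mult_ac)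
  finally show ?thesis .
qed

lemma cont_rK: assumes "K \<ge> 0" shows "continuous_on {0..1} (rK K)"
proof (rule lipschitz_on_continuous_on)
  show "(K * exp K * (\<integral>x. gK K x \<partial>M))-lipschitz_on {0..1} (rK K)"
  proof (rule lipschitz_onI)
    fix b c :: real assume "b \<in> {0..1}" "c \<in> {0..1}"
    then show "dist (rK K b) (rK K c) \<le> K * exp K * (\<integral>x. gK K x \<partial>M) * dist b c"
      using lip_rK[OF assms, of b c] by (simp add: dist_real_def mult_ac)
  next
    show "0 \<le> K * exp K * (\<integral>x. gK K x \<partial>M)"
      using assms gK_nonneg by (simp add: integral_nonneg)
  qed
qed

lemma rK_lower: "rK K b \<ge> exp (- (\<bar>b\<bar> * K)) * (\<integral>x. gK K x \<partial>M)"
proof -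
  have "(\<integral>x. exp (- (\<bar>b\<bar> * K)) * gK K x \<partial>M) \<le> rK K b"
    unfolding rK_def
  proof (intro integral_mono integrable_mult_right int_gK int_fK)
    fix x
    show "exp (- (\<bar>b\<bar> * K)) * gK K x \<le> fK K b x"
    proof (cases "x \<in> SK K")
      case True
      have "exp (- (\<bar>b\<bar> * K)) \<le> exp (b * ell x)" using mul_ell_bd[OF True, of b] by simp
      then have "exp (- (\<bar>b\<bar> * K)) * gK K x \<le> exp (b * ell x) * gK K x"
        using gK_nonneg[of K x] by (intro mult_right_mono) auto
      then show ?thesis by (simp add: fK_def mult.commute)
    qed (simp add: fK_def gK_def)
  qed
  then show ?thesis by simp
qed

lemma rK_nonneg: "rK K b \<ge> 0" unfolding rK_def by (intro integral_nonneg_AE AE_I2 fK_nonneg)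


lemma ev_lin: assumes "c > 0" shows "eventually (\<lambda>n. real n * c \<ge> B) sequentially"
proof -
  have "eventually (\<lambda>n. n \<ge> nat \<lceil>B / c\<rceil>) sequentially" by (rule eventually_ge_at_top)
  then show ?thesis
  proof (rule eventually_mono)
    fix n assume "nat \<lceil>B / c\<rceil> \<le> n"
    then have "B / c \<le> real n" by linarith
    then show "B \<le> real n * c" using assms by (simp add: pos_divide_le_eq)
  qed
qed

lemma lower_K:
  assumes K: "K \<ge> 0" and pos: "(\<integral>x. gK K x \<partial>M) > 0" and eps: "\<epsilon> > 0"
  shows "\<exists>\<alpha>\<in>{0..1}. eventually (\<lambda>n. mm n \<ge> exp (real n * (ln (rK K \<alpha>) - \<epsilon>))) sequentially"
proof -
  obtain \<alpha> where a: "\<alpha> \<in> {0..1}" and amin: "\<And>y. y \<in> {0..1} \<Longrightarrow> rK K \<alpha> \<le> rK K y"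
    using continuous_attains_inf[of "{0..1::real}" "rK K"] cont_rK[OF K] by auto
  define \<rho> where "\<rho> = rK K \<alpha>"
  define d where "d = dK K \<alpha>"
  define C where "C = K\<^sup>2 * exp (2 * K) * (\<integral>x. gK K x \<partial>M)"
  have C0: "C \<ge> 0" using pos by (simp add: C_def)
  have \<rho>pos: "\<rho> > 0"
  proof -
    have "0 < exp (- (\<bar>\<alpha>\<bar> * K)) * (\<integral>x. gK K x \<partial>M)" using pos by simp
    also have "\<dots> \<le> \<rho>" unfolding \<rho>_def by (rule rK_lower)
    finally show ?thesis .
  qed
  have tay: "rK K (\<alpha> + t) \<le> \<rho> + t * d + t\<^sup>2 * C" if t: "\<bar>t\<bar> \<le> 1" for t
  proof -
    have "exp ((\<bar>\<alpha>\<bar> + \<bar>t\<bar>) * K) \<le> exp (2 * K)"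
    proof -
      have "(\<bar>\<alpha>\<bar> + \<bar>t\<bar>) * K \<le> 2 * K" using a t K by (intro mult_right_mono) auto
      then show ?thesis by simp
    qed
    then have "t\<^sup>2 * (K\<^sup>2 * exp ((\<bar>\<alpha>\<bar> + \<bar>t\<bar>) * K)) * (\<integral>x. gK K x \<partial>M) \<le> t\<^sup>2 * C"
      using pos unfolding C_def by (simp add: mult_left_mono mult_right_mono mult.assoc)
    then show ?thesis using taylor_rK[OF K, of \<alpha> t] unfolding \<rho>_def d_def by linarith
  qed
  have kkt1: "d \<ge> 0" if "\<alpha> < 1"
  proof (rule ccontr)
    assume "\<not> d \<ge> 0"
    then have dn: "d < 0" by simp
    define t where "t = min (1 - \<alpha>) (- d / (2 * (C + 1)))"
    have t0: "t > 0" using that dn C0 by (simp add: t_def divide_neg_pos)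
    have t1: "t \<le> 1 - \<alpha>" by (simp add: t_def)
    have t2: "t \<le> - d / (2 * (C + 1))" by (simp add: t_def)
    have "t * C \<le> (- d / (2 * (C + 1))) * C" using t2 C0 by (rule mult_right_mono)
    also have "\<dots> \<le> - d / 2" using dn C0 by (simp add: field_simps)
    finally have "t * (t * C) \<le> t * (- d / 2)" using t0 by (intro mult_left_mono) auto
    then have "t\<^sup>2 * C \<le> t * (- d / 2)" by (simp add: power2_eq_square mult.assoc)
    moreover have "t * d < 0" using t0 dn by (rule mult_pos_neg)
    moreover have "\<bar>t\<bar> \<le> 1" using t0 t1 a by auto
    ultimately have "rK K (\<alpha> + t) < \<rho>" using tay[of t] by linarith
    moreover have "\<alpha> + t \<in> {0..1}" using a t0 t1 by auto
    ultimately show False using amin unfolding \<rho>_def by fastforce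
  qed
  have kkt2: "d \<le> 0" if "\<alpha> > 0"
  proof (rule ccontr)
    assume "\<not> d \<le> 0"
    then have dn: "d > 0" by simp
    define t where "t = min \<alpha> (d / (2 * (C + 1)))"
    have t0: "t > 0" using that dn C0 by (simp add: t_def divide_pos_pos)
    have t1: "t \<le> \<alpha>" by (simp add: t_def)
    have t2: "t \<le> d / (2 * (C + 1))" by (simp add: t_def)
    have "t * C \<le> (d / (2 * (C + 1))) * C" using t2 C0 by (rule mult_right_mono)
    also have "\<dots> \<le> d / 2" using dn C0 by (simp add: field_simps)
    finally have "t * (t * C) \<le> t * (d / 2)" using t0 by (intro mult_left_mono) auto
    then have "t\<^sup>2 * C \<le> t * (d / 2)" by (simp add: power2_eq_square mult.assoc)
    moreover have "\<bar>- t\<bar> \<le> 1" using t0 t1 a by auto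
    moreover have "t * d > 0" using t0 dn by simp
    ultimately have "rK K (\<alpha> + - t) < \<rho>" using tay[of "-t"] by simp
    moreover have "\<alpha> + - t \<in> {0..1}" using a t0 t1 by auto
    ultimately show False using amin unfolding \<rho>_def by fastforce
  qed
  have ad: "\<alpha> * d \<le> 0"
    using kkt2 a by (cases "\<alpha> > 0") (auto simp: mult_nonneg_nonpos)
  have ad2: "(1 - \<alpha>) * d \<ge> 0"
    using kkt1 a by (cases "\<alpha> < 1") auto
  define h where "h = min 1 (\<epsilon> * \<rho> / (4 * (C + 1)))"
  have h0: "h > 0" using eps \<rho>pos C0 by (simp add: h_def)
  have h1: "h \<le> 1" by (simp add: h_def)
  have hC: "h * C \<le> \<epsilon> * \<rho> / 4"
  proof -
    have "h * C \<le> (\<epsilon> * \<rho> / (4 * (C + 1))) * C" using C0 by (intro mult_right_mono) (auto simp: h_def)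
    also have "\<dots> \<le> \<epsilon> * \<rho> / 4" using C0 eps \<rho>pos by (simp add: field_simps)
    finally show ?thesis .
  qed
  have Rb: "\<rho> + h\<^sup>2 * C \<le> \<rho> * exp (h * \<epsilon> / 4)"
  proof -
    have "h\<^sup>2 * C = h * (h * C)" by (simp add: power2_eq_square)
    also have "\<dots> \<le> h * (\<epsilon> * \<rho> / 4)" using hC h0 by (intro mult_left_mono) auto
    finally have "\<rho> + h\<^sup>2 * C \<le> \<rho> * (1 + h * \<epsilon> / 4)" by (simp add: algebra_simps)
    also have "\<dots> \<le> \<rho> * exp (h * \<epsilon> / 4)"
      using \<rho>pos by (intro mult_left_mono exp_ge_add_one_self[unfolded add.commute[of 1]]) auto
    finally show ?thesis .
  qed
  have R1: "rK K (\<alpha> * (1 + h)) \<le> \<rho> * exp (h * \<epsilon> / 4)"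
  proof -
    have "\<bar>\<alpha> * h\<bar> \<le> 1" using a h0 h1 by (auto simp: abs_mult mult_le_one)
    then have "rK K (\<alpha> + \<alpha> * h) \<le> \<rho> + (\<alpha> * h) * d + (\<alpha> * h)\<^sup>2 * C" by (rule tay)
    also have "(\<alpha> * h) * d \<le> 0"
    proof -
      have e: "(\<alpha> * h) * d = (\<alpha> * d) * h" by (simp add: mult_ac)
      have "(\<alpha> * d) * h \<le> 0" using h0 by (intro mult_nonpos_nonneg[OF ad]) auto
      then show ?thesis by (simp only: e)
    qed
    also have "(\<alpha> * h)\<^sup>2 * C \<le> h\<^sup>2 * C"
      using a h0 C0 by (intro mult_right_mono) (auto simp: power_mult_distrib power_le_one mult_left_le_one_le)
    finally have "rK K (\<alpha> + \<alpha> * h) \<le> \<rho> + h\<^sup>2 * C" by simp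
    then show ?thesis using Rb by (simp add: algebra_simps)
  qed
  have R2: "rK K (\<alpha> - (1 - \<alpha>) * h) \<le> \<rho> * exp (h * \<epsilon> / 4)"
  proof -
    have "\<bar>- ((1 - \<alpha>) * h)\<bar> \<le> 1" using a h0 h1 by (auto simp: abs_mult mult_le_one)
    then have "rK K (\<alpha> + - ((1 - \<alpha>) * h)) \<le> \<rho> + (- ((1 - \<alpha>) * h)) * d + (- ((1 - \<alpha>) * h))\<^sup>2 * C" by (rule tay)
    also have "(- ((1 - \<alpha>) * h)) * d \<le> 0"
    proof -
      have e: "(- ((1 - \<alpha>) * h)) * d = - (((1 - \<alpha>) * d) * h)" by (simp add: mult_ac)
      have "((1 - \<alpha>) * d) * h \<ge> 0" using h0 ad2 by simp
      then show ?thesis by (simp only: e)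
    qed
    also have "(- ((1 - \<alpha>) * h))\<^sup>2 * C \<le> h\<^sup>2 * C"
      using a h0 C0 by (intro mult_right_mono) (auto simp: power_mult_distrib power_le_one mult_left_le_one_le)
    finally have "rK K (\<alpha> + - ((1 - \<alpha>) * h)) \<le> \<rho> + h\<^sup>2 * C" by simp
    then show ?thesis using Rb by (simp add: algebra_simps)
  qed
  have ev1: "eventually (\<lambda>n. real n * (h * \<epsilon> / 4) \<ge> ln 4) sequentially"
    using h0 eps by (intro ev_lin) auto
  have ev2: "eventually (\<lambda>n. real n * (\<epsilon> / 2) \<ge> ln 2) sequentially"
    using eps by (intro ev_lin) auto
  have "eventually (\<lambda>n. mm n \<ge> exp (real n * (ln \<rho> - \<epsilon>))) sequentially"
    using ev1 ev2
  proof eventually_elim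
    case (elim n)
    define A where "A = exp (real n * \<epsilon> / 2)"
    have A0: "A > 0" by (simp add: A_def)
    have Ah: "A powr (-h) = exp (- (real n * (h * \<epsilon> / 2)))"
      by (simp add: A_def powr_def algebra_simps)
    have "rK K (\<alpha> * (1 + h)) ^ n \<le> (\<rho> * exp (h * \<epsilon> / 4)) ^ n"
      using R1 rK_nonneg by (intro power_mono) auto
    moreover have "rK K (\<alpha> - (1 - \<alpha>) * h) ^ n \<le> (\<rho> * exp (h * \<epsilon> / 4)) ^ n"
      using R2 rK_nonneg by (intro power_mono) auto
    ultimately have S: "rK K (\<alpha> * (1 + h)) ^ n + rK K (\<alpha> - (1 - \<alpha>) * h) ^ n \<le> 2 * (\<rho> * exp (h * \<epsilon> / 4)) ^ n"
      by simp
    have E: "(\<rho> * exp (h * \<epsilon> / 4)) ^ n = \<rho> ^ n * exp (real n * (h * \<epsilon> / 4))"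
      by (simp add: power_mult_distrib exp_of_nat_mult[symmetric] mult.commute)
    have "\<rho> ^ n \<le> A * mm n + A powr (-h) * (rK K (\<alpha> * (1 + h)) ^ n + rK K (\<alpha> - (1 - \<alpha>) * h) ^ n)"
      unfolding \<rho>_def by (rule core[OF A0 h0])
    also have "\<dots> \<le> A * mm n + A powr (-h) * (2 * (\<rho> * exp (h * \<epsilon> / 4)) ^ n)"
      using S by (intro add_left_mono mult_left_mono) auto
    also have "A powr (-h) * (2 * (\<rho> * exp (h * \<epsilon> / 4)) ^ n) = \<rho> ^ n * (2 * exp (- (real n * (h * \<epsilon> / 4))))"
      unfolding Ah E by (simp add: algebra_simps flip: exp_add)
    also have "2 * exp (- (real n * (h * \<epsilon> / 4))) \<le> 1 / 2"
    proof -
      have "exp (- (real n * (h * \<epsilon> / 4))) \<le> exp (- ln 4)" using elim(1) by simp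
      then show ?thesis by (simp add: exp_minus)
    qed
    finally have "\<rho> ^ n \<le> A * mm n + \<rho> ^ n * (1 / 2)" using \<rho>pos by (simp add: mult_left_mono)
    then have m: "\<rho> ^ n / (2 * A) \<le> mm n" using A0 by (simp add: field_simps)
    have e1: "exp (real n * ln \<rho>) = \<rho> ^ n" using \<rho>pos by (simp add: exp_of_nat_mult)
    have "exp (real n * (ln \<rho> - \<epsilon>)) = exp (real n * ln \<rho>) / (exp (real n * \<epsilon> / 2) * exp (real n * \<epsilon> / 2))"
      by (simp add: exp_diff right_diff_distrib exp_add[symmetric])
    also have "\<dots> = \<rho> ^ n / (exp (real n * \<epsilon> / 2) * exp (real n * \<epsilon> / 2))" by (simp only: e1)
    also have "\<dots> \<le> \<rho> ^ n / (2 * A)"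
    proof -
      have "2 \<le> exp (real n * \<epsilon> / 2)"
        using elim(2) by (metis exp_ln_iff exp_le_cancel_iff zero_less_numeral mult.commute times_divide_eq_right)
      then have "2 * A \<le> exp (real n * \<epsilon> / 2) * exp (real n * \<epsilon> / 2)"
        using A0 unfolding A_def by (intro mult_right_mono) auto
      then show ?thesis using \<rho>pos A0 by (intro divide_left_mono) auto
    qed
    finally show ?case using m by linarith
  qed
  then show ?thesis using a unfolding \<rho>_def by blast
qed


definition uu :: "'a \<Rightarrow> real" where "uu x = \<phi> x * (if p x > 0 \<and> q x > 0 then p x + q x else 0)"

lemma uu_meas[measurable]: "uu \<in> borel_measurable M" unfolding uu_def by measurable

lemma int_uu: "integrable M uu"
proof (rule Bochner_Integration.integrable_bound)
  show "integrable M (\<lambda>x. \<phi> x * p x + \<phi> x * q x)" using intp intq by simp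
  show "uu \<in> borel_measurable M" by measurable
  show "AE x in M. norm (uu x) \<le> norm (\<phi> x * p x + \<phi> x * q x)"
    using phi0 p0 q0 by (intro AE_I2) (auto simp: uu_def distrib_left)
qed

lemma ww_le_uu: assumes "0 \<le> a" "a \<le> 1" shows "ww a x \<le> uu x"
proof (cases "p x > 0 \<and> q x > 0")
  case True
  define m where "m = max (p x) (q x)"
  have "p x powr a * q x powr (1 - a) \<le> m powr a * m powr (1 - a)"
    using True assms by (intro mult_mono powr_mono2) (auto simp: m_def)
  also have "\<dots> = m"
  proof -
    have "m > 0" using True unfolding m_def by (auto simp: less_max_iff_disj)
    then show ?thesis by (simp add: powr_add[symmetric])
  qed
  also have "\<dots> \<le> p x + q x" using True by (simp add: m_def)
  finally show ?thesis using True phi0[of x] by (simp add: ww_def uu_def mult_left_mono)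
next
  case False
  then have "p x = 0 \<or> q x = 0" using p0[of x] q0[of x] by auto
  then show ?thesis using False by (auto simp: ww_def uu_def)
qed

lemma ww_nonneg: "ww a x \<ge> 0" using phi0 by (simp add: ww_def)

lemma ww_meas[measurable]: "ww a \<in> borel_measurable M" unfolding ww_def by measurable

lemma int_ww: assumes "0 \<le> a" "a \<le> 1" shows "integrable M (ww a)"
proof (rule Bochner_Integration.integrable_bound[OF int_uu])
  show "ww a \<in> borel_measurable M" by measurable
  show "AE x in M. norm (ww a x) \<le> norm (uu x)"
  proof (intro AE_I2)
    fix x
    have "0 \<le> ww a x" "ww a x \<le> uu x" using ww_le_uu[OF assms] ww_nonneg by auto
    then show "norm (ww a x) \<le> norm (uu x)" by simp
  qed
qed

lemma approx:
  assumes "\<delta> > 0"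
  shows "\<exists>K\<ge>0. \<forall>a\<in>{0..1}. (\<integral>x. ww a x \<partial>M) - rK K a \<le> \<delta>"
proof -
  define s where "s k x = (1 - indicator (SK (real k)) x) * uu x" for k :: nat and x
  have lim: "(\<lambda>k. \<integral>x. s k x \<partial>M) \<longlonglongrightarrow> (\<integral>x. 0 \<partial>M)"
  proof (rule integral_dominated_convergence[where w = uu])
    show "(\<lambda>x. 0::real) \<in> borel_measurable M" by simp
    show "\<And>k. s k \<in> borel_measurable M" unfolding s_def by measurable
    show "integrable M uu" by (rule int_uu)
    show "AE x in M. (\<lambda>k. s k x) \<longlonglongrightarrow> 0"
    proof (rule AE_I2)
      fix x assume x: "x \<in> space M"
      show "(\<lambda>k. s k x) \<longlonglongrightarrow> 0"
      proof (cases "p x > 0 \<and> q x > 0")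
        case True
        have "eventually (\<lambda>k. k \<ge> nat \<lceil>\<bar>ell x\<bar>\<rceil>) sequentially" by (rule eventually_ge_at_top)
        then have "eventually (\<lambda>k. s k x = 0) sequentially"
        proof (rule eventually_mono)
          fix k assume "nat \<lceil>\<bar>ell x\<bar>\<rceil> \<le> k"
          then have "\<bar>ell x\<bar> \<le> real k" by linarith
          then have "x \<in> SK (real k)" using True x by (simp add: SK_def)
          then show "s k x = 0" by (simp add: s_def)
        qed
        then show ?thesis by (rule tendsto_eventually)
      next
        case False
        then have "uu x = 0" unfolding uu_def by auto
        then show ?thesis by (simp add: s_def)
      qed
    qed
    show "\<And>k. AE x in M. norm (s k x) \<le> uu x"
    proof (intro AE_I2)
      fix k x
      have "uu x \<ge> 0" using phi0[of x] p0[of x] q0[of x] by (simp add: uu_def)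
      then show "norm (s k x) \<le> uu x" by (simp add: s_def indicator_def)
    qed
  qed
  then have "eventually (\<lambda>k. (\<integral>x. s k x \<partial>M) < \<delta>) sequentially"
    using assms by (intro order_tendstoD(2)) auto
  then obtain k where k: "(\<integral>x. s k x \<partial>M) < \<delta>" by (meson eventually_sequentially order_refl)
  have "(\<integral>x. ww a x \<partial>M) - rK (real k) a \<le> \<delta>" if a: "a \<in> {0..1}" for a
  proof -
    have "(\<integral>x. ww a x \<partial>M) - rK (real k) a = (\<integral>x. ww a x - fK (real k) a x \<partial>M)"
      using int_ww[of a] int_fK a by (simp add: rK_def)
    also have "\<dots> \<le> (\<integral>x. s k x \<partial>M)"
    proof (intro integral_mono Bochner_Integration.integrable_diff int_ww int_fK)
      show "integrable M (s k)" unfolding s_def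
        by (intro Bochner_Integration.integrable_bound[OF int_uu]) (auto simp: indicator_def uu_def intro!: AE_I2 mult_nonneg_nonneg phi0 add_nonneg_nonneg p0 q0)
      fix x
      show "ww a x - fK (real k) a x \<le> s k x"
      proof (cases "x \<in> SK (real k)")
        case True
        then show ?thesis using on_SK(1)[OF True, of a] by (simp add: s_def fK_def gK_def ww_def)
      next
        case False
        then show ?thesis using ww_le_uu[of a x] a by (simp add: s_def fK_def gK_def)
      qed
    qed (use a in auto)
    finally show ?thesis using k by linarith
  qed
  then show ?thesis by (intro exI[of _ "real k"]) auto
qed


lemma fK0: "fK K 0 x = gK K x" by (simp add: fK_def)

lemma rK_le_r: "rK K a \<le> (\<integral>x. ww a x \<partial>M)" if "0 \<le> a" "a \<le> 1"
  unfolding rK_def by (intro integral_mono int_fK int_ww that fK_le_ww)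

lemma main_loc:
  assumes rpos: "\<And>a. a \<in> {0..1} \<Longrightarrow> (\<integral>x. ww a x \<partial>M) > 0"
  shows "\<exists>e::nat\<Rightarrow>real. e \<in> o(\<lambda>n. real n) \<and>
    (\<forall>\<^sub>F n in sequentially. TV_phi M \<phi> p q n =
        (1/2) * ((E_phi M \<phi> p) ^ n + (E_phi M \<phi> q) ^ n)
        - exp (- real n * (SUP a\<in>{0..1}. - ln (\<integral>x. ww a x \<partial>M)) + e n))"
proof -
  define r where "r a = (\<integral>x. ww a x \<partial>M)" for a
  define D where "D = (SUP a\<in>{0..1}. - ln (r a))"
  have r0: "r 0 > 0" using rpos[of 0] by (simp add: r_def)
  obtain K0 where K0: "K0 \<ge> 0" "\<And>a. a \<in> {0..1} \<Longrightarrow> r a - rK K0 a \<le> r 0 / 2"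
    using approx[of "r 0 / 2"] r0 unfolding r_def by auto
  have g0: "(\<integral>x. gK K0 x \<partial>M) \<ge> r 0 / 2"
    using K0(2)[of 0] by (simp add: rK_def fK0)
  define c0 where "c0 = exp (- K0) * (r 0 / 2)"
  have c0: "c0 > 0" using r0 by (simp add: c0_def)
  have rlow: "r a \<ge> c0" if a: "a \<in> {0..1}" for a
  proof -
    have "c0 \<le> exp (- (\<bar>a\<bar> * K0)) * (\<integral>x. gK K0 x \<partial>M)"
      unfolding c0_def
    proof (intro mult_mono g0)
      have "\<bar>a\<bar> * K0 \<le> K0" using a K0(1) by (simp add: mult_left_le_one_le)
      then show "exp (- K0) \<le> exp (- (\<bar>a\<bar> * K0))" by simp
    qed (use r0 in auto)
    also have "\<dots> \<le> rK K0 a" by (rule rK_lower)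
    also have "\<dots> \<le> r a" using a unfolding r_def by (intro rK_le_r) auto
    finally show ?thesis .
  qed
  have bdd: "bdd_above ((\<lambda>a. - ln (r a)) ` {0..1})"
  proof (rule bdd_aboveI2)
    fix a :: real assume "a \<in> {0..1}"
    then have "r a \<ge> c0" by (rule rlow)
    then show "- ln (r a) \<le> - ln c0" using c0 by simp
  qed
  have U: "- ln (r a) \<le> D" if "a \<in> {0..1}" for a
    unfolding D_def by (rule cSUP_upper[OF that bdd])
  have S: "\<exists>a\<in>{0..1}. D - \<epsilon> < - ln (r a)" if "\<epsilon> > 0" for \<epsilon>
  proof -
    have "D - \<epsilon> < D" using that by simp
    then show ?thesis unfolding D_def using less_cSUP_iff[OF _ bdd] by auto
  qed
  have upper_ev: "mm n \<le> exp (real n * (\<epsilon> - D))" if eps: "\<epsilon> > 0" for \<epsilon> n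
  proof -
    obtain a where a: "a \<in> {0..1}" "D - \<epsilon> < - ln (r a)" using S[OF eps] by blast
    have ra: "r a > 0" using rpos[OF a(1)] by (simp add: r_def)
    have "mm n \<le> r a ^ n" unfolding r_def using a(1) by (intro upper int_ww) auto
    also have "\<dots> = exp (real n * ln (r a))" using ra by (simp add: exp_of_nat_mult)
    also have "\<dots> \<le> exp (real n * (\<epsilon> - D))"
    proof -
      have "real n * ln (r a) \<le> real n * (\<epsilon> - D)" using a(2) by (intro mult_left_mono) auto
      then show ?thesis by simp
    qed
    finally show ?thesis .
  qed
  have lower_ev: "eventually (\<lambda>n. mm n \<ge> exp (real n * (- D - \<epsilon>))) sequentially" if eps: "\<epsilon> > 0" for \<epsilon>
  proof -
    define \<delta> where "\<delta> = exp (- D) * (1 - exp (- (\<epsilon> / 2)))"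
    have \<delta>: "\<delta> > 0" using eps by (simp add: \<delta>_def)
    obtain K where K: "K \<ge> 0" "\<And>a. a \<in> {0..1} \<Longrightarrow> r a - rK K a \<le> min \<delta> (r 0 / 2)"
      using approx[of "min \<delta> (r 0 / 2)"] r0 \<delta> unfolding r_def by auto
    have gpos: "(\<integral>x. gK K x \<partial>M) > 0"
      using K(2)[of 0] r0 by (simp add: rK_def fK0)
    obtain \<alpha> where a: "\<alpha> \<in> {0..1}" and ev: "eventually (\<lambda>n. mm n \<ge> exp (real n * (ln (rK K \<alpha>) - \<epsilon> / 2))) sequentially"
      using lower_K[OF K(1) gpos, of "\<epsilon> / 2"] eps by auto
    have "exp (- D) \<le> r \<alpha>"
    proof -
      have "- D \<le> ln (r \<alpha>)" using U[OF a] by simp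
      then have "exp (- D) \<le> exp (ln (r \<alpha>))" by simp
      also have "\<dots> = r \<alpha>" using rpos[OF a] by (simp add: r_def)
      finally show ?thesis .
    qed
    then have "rK K \<alpha> \<ge> exp (- D) - \<delta>" using K(2)[OF a] by linarith
    also have "exp (- D) - \<delta> = exp (- D) * exp (- (\<epsilon> / 2))" by (simp add: \<delta>_def algebra_simps)
    also have "\<dots> = exp (- D - \<epsilon> / 2)" by (simp add: exp_add[symmetric])
    finally have rk: "rK K \<alpha> \<ge> exp (- D - \<epsilon> / 2)" .
    then have "ln (rK K \<alpha>) \<ge> - D - \<epsilon> / 2"
      using ln_le_cancel_iff[of "exp (- D - \<epsilon> / 2)" "rK K \<alpha>"]
        less_le_trans[OF exp_gt_zero rk] by simp
    then have "real n * (- D - \<epsilon>) \<le> real n * (ln (rK K \<alpha>) - \<epsilon> / 2)" for n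
      by (intro mult_left_mono) auto
    then show ?thesis using ev by (elim eventually_mono) (meson exp_le_cancel_iff order_trans)
  qed
  define e where "e n = ln (mm n) + real n * D" for n
  have lo: "e \<in> o(\<lambda>n. real n)"
  proof (rule landau_o.smallI)
    fix c :: real assume c: "c > 0"
    show "eventually (\<lambda>n. norm (e n) \<le> c * norm (real n)) sequentially"
      using lower_ev[OF c]
    proof (elim eventually_mono)
      fix n assume l: "exp (real n * (- D - c)) \<le> mm n"
      then have mp: "mm n > 0" by (meson exp_gt_zero less_le_trans)
      have "real n * (- D - c) \<le> ln (mm n)"
        using l mp ln_le_cancel_iff[of "exp (real n * (- D - c))" "mm n"] by simp
      moreover have "ln (mm n) \<le> real n * (c - D)"
        using upper_ev[OF c, of n] mp ln_le_cancel_iff[of "mm n" "exp (real n * (c - D))"] by simp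
      ultimately show "norm (e n) \<le> c * norm (real n)"
        by (simp add: e_def abs_le_iff algebra_simps)
    qed
  qed
  have "eventually (\<lambda>n. TV_phi M \<phi> p q n =
        (1/2) * ((E_phi M \<phi> p) ^ n + (E_phi M \<phi> q) ^ n) - exp (- real n * D + e n)) sequentially"
    using lower_ev[of 1, OF zero_less_one]
  proof (elim eventually_mono)
    fix n assume l: "exp (real n * (- D - 1)) \<le> mm n"
    then have mp: "mm n > 0" by (meson exp_gt_zero less_le_trans)
    have "exp (- real n * D + e n) = mm n" using mp by (simp add: e_def)
    then show "TV_phi M \<phi> p q n = (1/2) * ((E_phi M \<phi> p) ^ n + (E_phi M \<phi> q) ^ n) - exp (- real n * D + e n)"
      by (simp add: TV_eq)
  qed
  then show ?thesis using lo unfolding D_def r_def by blast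
qed

end

theorem corollary3p2:
  fixes M :: "'a::polish_space measure"
    and p q \<phi> :: "'a \<Rightarrow> real"
  assumes "sigma_finite_measure M"
    and "sets M = sets borel"
    and "p \<in> borel_measurable M" and "q \<in> borel_measurable M" and "\<phi> \<in> borel_measurable M"
    and "\<And>x. p x \<ge> 0" and "\<And>x. q x \<ge> 0" and "\<And>x. \<phi> x \<ge> 0"
    and "(\<integral>\<^sup>+x. ennreal (p x) \<partial>M) = 1" and "(\<integral>\<^sup>+x. ennreal (q x) \<partial>M) = 1"
    and "AE x in M. p x > 0" and "AE x in M. q x > 0"
    and "\<And>\<alpha>. \<alpha> \<in> {0..1} \<Longrightarrow> 0 < rho_w M \<phi> p q \<alpha> \<and> rho_w M \<phi> p q \<alpha> < \<infinity>"
  shows "\<exists>e :: nat \<Rightarrow> real. e \<in> o(\<lambda>n. real n) \<and>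
    (\<forall>\<^sub>F n in sequentially. TV_phi M \<phi> p q n =
        (1/2) * ((E_phi M \<phi> p) ^ n + (E_phi M \<phi> q) ^ n)
        - exp (- real n * chernoff_w M \<phi> p q + e n))"
proof -
  have mp[measurable]: "p \<in> borel_measurable M" "q \<in> borel_measurable M" "\<phi> \<in> borel_measurable M"
    using assms(3-5) by auto
  have intp: "integrable M (\<lambda>x. \<phi> x * p x)"
  proof (rule integrableI_nonneg)
    show "(\<lambda>x. \<phi> x * p x) \<in> borel_measurable M" by measurable
    show "AE x in M. 0 \<le> \<phi> x * p x" using assms(6,8) by (intro AE_I2) auto
    have "(\<integral>\<^sup>+x. ennreal (\<phi> x * p x) \<partial>M) = rho_w M \<phi> p q 1"
      unfolding rho_w_def
    proof (rule nn_integral_cong_AE)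
      show "AE x in M. ennreal (\<phi> x * p x) = ennreal (\<phi> x * p x powr 1 * q x powr (1 - 1))"
        using assms(12)
      proof (elim AE_mp, intro AE_I2 impI)
        fix x assume "q x > 0"
        then show "ennreal (\<phi> x * p x) = ennreal (\<phi> x * p x powr 1 * q x powr (1 - 1))"
          using assms(6)[of x] by (simp add: powr_one)
      qed
    qed
    also have "\<dots> < \<infinity>" using assms(13)[of 1] by auto
    finally show "(\<integral>\<^sup>+x. ennreal (\<phi> x * p x) \<partial>M) < \<infinity>" .
  qed
  have intq: "integrable M (\<lambda>x. \<phi> x * q x)"
  proof (rule integrableI_nonneg)
    show "(\<lambda>x. \<phi> x * q x) \<in> borel_measurable M" by measurable
    show "AE x in M. 0 \<le> \<phi> x * q x" using assms(7,8) by (intro AE_I2) auto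
    have "(\<integral>\<^sup>+x. ennreal (\<phi> x * q x) \<partial>M) = rho_w M \<phi> p q 0"
      unfolding rho_w_def
    proof (rule nn_integral_cong_AE)
      show "AE x in M. ennreal (\<phi> x * q x) = ennreal (\<phi> x * p x powr 0 * q x powr (1 - 0))"
        using assms(11)
      proof (elim AE_mp, intro AE_I2 impI)
        fix x assume "p x > 0"
        then show "ennreal (\<phi> x * q x) = ennreal (\<phi> x * p x powr 0 * q x powr (1 - 0))"
          using assms(7)[of x] by (simp add: powr_one)
      qed
    qed
    also have "\<dots> < \<infinity>" using assms(13)[of 0] by auto
    finally show "(\<integral>\<^sup>+x. ennreal (\<phi> x * q x) \<partial>M) < \<infinity>" .
  qed
  interpret chern M p q \<phi>
    unfolding chern_def using assms(1,6,7,8) mp intp intq by blast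
  have rr: "enn2real (rho_w M \<phi> p q a) = (\<integral>x. ww a x \<partial>M)" for a
  proof -
    have "(\<integral>x. ww a x \<partial>M) = enn2real (\<integral>\<^sup>+x. ennreal (ww a x) \<partial>M)"
      by (rule integral_eq_nn_integral) (auto intro!: AE_I2 ww_nonneg)
    then show ?thesis by (simp add: rho_w_def ww_def mult.assoc)
  qed
  have rpos: "(\<integral>x. ww a x \<partial>M) > 0" if "a \<in> {0..1}" for a
    using assms(13)[OF that] rr[of a] enn2real_positive_iff[of "rho_w M \<phi> p q a"] by auto
  have ch: "chernoff_w M \<phi> p q = (SUP a\<in>{0..1}. - ln (\<integral>x. ww a x \<partial>M))"
    unfolding chernoff_w_def by (rule SUP_cong) (simp_all add: rr)
  show ?thesis using main_loc[OF rpos] unfolding ch by blast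
qed

end
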